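(* Let $1<p<\infty$, let $K\ge2$, and let $(X,d,\mu)$ be a $K$-regular tree as described in the context, with sets $E_n,F_n$ as defined there. Then the sequence $\{\mathrm{Cap}_p(E_n,F_n)\}_{n=1}^\infty$ is non-increasing and there exists a constant $0<M_1<\infty$ such that $\mathrm{Cap}_p(E_n,F_n)\le M_1$ for all $n\in\mathbb{N}$.
   Context: A $K$-regular tree is a rooted tree (root $0$) in which every vertex has exactly $K$ children; $X$ is the union of its vertices and edges, each edge an isometric copy of $[0,1]$. $|x|$ is the graph distance from $0$ to $x$, $[y,z]$ the unique geodesic between $y,z$. Let $\lambda,\mu:[0,\infty)\to(0,\infty)$ be locally integrable with $\lambda^p\mu^{-1}\in L^{1/(p-1)}_{\mathrm{loc}}([0,\infty))$; $d\mu(x)=\mu(|x|)\,d|x|$, $d(y,z)=\int_{[y,z]}\lambda(|x|)\,d|x|$ ($d|x|$ gives each edge Lebesgue measure $1$), $ds=\lambda(|x|)\,d|x|$. $X^n=\{x:|x|\le n\}$. An upper gradient of $u$ is a Borel $g\ge0$ with $|u(y)-u(z)|\le\int_{[y,z]}g\,ds$ for all $y,z$; $g_u$ is the minimal upper gradient; $N^{1,p}_{\mathrm{loc}}(X)$ is the space of $u\in L^p_{\mathrm{loc}}(X)$ with an upper gradient in $L^p_{\mathrm{loc}}(X)$. Let $x_0$ be a vertex adjacent to the root $0$ (a child of $0$), $T_{x_0}=\{y\in X:x_0\in[0,y]\}$, $T_1=[0,x_0]\cup T_{x_0}$, and for $n\in\mathbb{N}$, $E_n=(X\setminus X^n)\cap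 T_1$, $F_n=(X\setminus X^n)\setminus T_1$. Define $\mathrm{Cap}_p(E_n,F_n)=\inf\{\int_Xg_u^p\,d\mu:u\in N^{1,p}_{\mathrm{loc}}(X),\ u\equiv1\text{ on }E_n,\ u\equiv0\text{ on }F_n,\ 0\le u\le1\}$. *)

theory Defs
  imports "HOL-Analysis.Analysis" "HOL-Library.Sublist"
begin

text \<open>Vertices are finite words over {0..K-1}; the root is the empty word.
  A non-root point is a pair (v,t) with v a non-root vertex and 0 < t \<le> 1:
  it is the point of the edge from the parent of v (= butlast v) to v at
  graph distance t from the parent.\<close>

definition verts :: "nat \<Rightarrow> nat list set" where
  "verts K = {v. \<forall>a\<in>set v. a < K}"

definition pts :: "nat \<Rightarrow> (nat list \<times> real) set" where
  "pts K = {([], 0)} \<union> {(v, t). v \<in> verts K \<and> v \<noteq> [] \<and> 0 < t \<and> t \<le> 1}"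

definition dist0 :: "nat list \<times> real \<Rightarrow> real" where
  "dist0 x = (if fst x = [] then 0 else real (length (fst x)) - 1 + snd x)"

definition seg0 :: "nat list \<times> real \<Rightarrow> (nat list \<times> real) set" where
  "seg0 y = {([], 0)}
     \<union> {(w, s). w \<noteq> [] \<and> strict_prefix w (fst y) \<and> 0 < s \<and> s \<le> 1}
     \<union> {(w, s). w \<noteq> [] \<and> w = fst y \<and> 0 < s \<and> s \<le> snd y}"

text \<open>The branching point of [0,y] and [0,z] (the point of [0,y] \<inter> [0,z] farthest from 0).\<close>
definition meet :: "nat list \<times> real \<Rightarrow> nat list \<times> real \<Rightarrow> nat list \<times> real" where
  "meet y z = (if y \<in> seg0 z then y else if z \<in> seg0 y then z
     else (let c = longest_common_prefix (fst y) (fst z) in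
           if c = [] then ([], 0) else (c, 1)))"

definition geo :: "nat list \<times> real \<Rightarrow> nat list \<times> real \<Rightarrow> (nat list \<times> real) set" where
  "geo y z = (seg0 y - seg0 z) \<union> (seg0 z - seg0 y) \<union> {meet y z}"

text \<open>With w = mu this is the integral w.r.t. d mu,
  with w = lambda (and f multiplied by an indicator of a geodesic) the line integral w.r.t. ds.\<close>
definition eint :: "(real \<Rightarrow> real) \<Rightarrow> nat \<Rightarrow> (nat list \<times> real \<Rightarrow> ennreal) \<Rightarrow> ennreal" where
  "eint w K f = (\<integral>\<^sup>+ v. (\<integral>\<^sup>+ t. f (v, t) * ennreal (w (dist0 (v, t))) * indicator {0<..1} t \<partial>lborel)
                   \<partial>count_space (verts K - {[]}))"

definition epow :: "ennreal \<Rightarrow> real \<Rightarrow> ennreal" where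
  "epow x p = (if x = \<infinity> then \<infinity> else ennreal (enn2real x powr p))"

definition borel_on_tree :: "(nat list \<times> real \<Rightarrow> 'b::topological_space) \<Rightarrow> bool" where
  "borel_on_tree f = (\<forall>v. (\<lambda>t. f (v, t)) \<in> borel_measurable borel)"

definition upper_gradient ::
  "nat \<Rightarrow> (real \<Rightarrow> real) \<Rightarrow> (nat list \<times> real \<Rightarrow> real) \<Rightarrow> (nat list \<times> real \<Rightarrow> ennreal) \<Rightarrow> bool" where
  "upper_gradient K lam u g =
     (borel_on_tree g \<and>
      (\<forall>y\<in>pts K. \<forall>z\<in>pts K. ennreal \<bar>u y - u z\<bar> \<le> eint lam K (\<lambda>x. g x * indicator (geo y z) x)))"

definition Xn :: "nat \<Rightarrow> nat \<Rightarrow> (nat list \<times> real) set" where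
  "Xn K n = {x \<in> pts K. dist0 x \<le> real n}"

text \<open>L^p_loc (every compact set of X lies in some X^n).\<close>
definition Lploc :: "nat \<Rightarrow> (real \<Rightarrow> real) \<Rightarrow> real \<Rightarrow> (nat list \<times> real \<Rightarrow> ennreal) \<Rightarrow> bool" where
  "Lploc K mu p f = (\<forall>n. eint mu K (\<lambda>x. epow (f x) p * indicator (Xn K n) x) < \<infinity>)"

definition N1ploc :: "nat \<Rightarrow> (real \<Rightarrow> real) \<Rightarrow> (real \<Rightarrow> real) \<Rightarrow> real \<Rightarrow> (nat list \<times> real \<Rightarrow> real) \<Rightarrow> bool" where
  "N1ploc K lam mu p u =
     (borel_on_tree u \<and> Lploc K mu p (\<lambda>x. ennreal \<bar>u x\<bar>) \<and>
      (\<exists>g. upper_gradient K lam u g \<and> Lploc K mu p g))"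

text \<open>Capacity: the integral of g_u^p equals the infimum of the integrals of g^p over
  upper gradients g of u, so the infimum is taken jointly over u and its upper gradients.\<close>
definition Cap :: "nat \<Rightarrow> (real \<Rightarrow> real) \<Rightarrow> (real \<Rightarrow> real) \<Rightarrow> real
                   \<Rightarrow> (nat list \<times> real) set \<Rightarrow> (nat list \<times> real) set \<Rightarrow> ennreal" where
  "Cap K lam mu p E F =
     (INF ug \<in> {(u, g). N1ploc K lam mu p u \<and> upper_gradient K lam u g \<and>
                      (\<forall>x\<in>E. u x = 1) \<and> (\<forall>x\<in>F. u x = 0) \<and>
                      (\<forall>x\<in>pts K. 0 \<le> u x \<and> u x \<le> 1)}.
        eint mu K (\<lambda>x. epow (snd ug x) p))"

text \<open>T_1 = [0,x0] \<union> T_{x0} for the child x0 = [i] of the root.\<close>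
definition T1 :: "nat \<Rightarrow> nat \<Rightarrow> (nat list \<times> real) set" where
  "T1 K i = {x \<in> pts K. fst x = [] \<or> hd (fst x) = i}"

definition En :: "nat \<Rightarrow> nat \<Rightarrow> nat \<Rightarrow> (nat list \<times> real) set" where
  "En K i n = (pts K - Xn K n) \<inter> T1 K i"

definition Fn :: "nat \<Rightarrow> nat \<Rightarrow> nat \<Rightarrow> (nat list \<times> real) set" where
  "Fn K i n = (pts K - Xn K n) - T1 K i"

end

theory Submission imports Defs begin

definition LamE :: "(real \<Rightarrow> real) \<Rightarrow> real \<Rightarrow> ennreal" where
  "LamE lam x = (\<integral>\<^sup>+ t. ennreal (lam t) * indicator {0<..x} t \<partial>lborel)"

lemma lam_meas:
  fixes lam :: "real \<Rightarrow> real" and a b :: real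
  assumes "set_integrable lborel {0..1} lam" "0 \<le> a" "b \<le> 1"
  shows "(\<lambda>t. ennreal (lam t) * indicator {a<..b} t) \<in> borel_measurable borel"
proof -
  have m: "(\<lambda>t. indicator {0..1} t *\<^sub>R lam t) \<in> borel_measurable lborel"
    using assms(1) unfolding set_integrable_def by blast
  have e: "(\<lambda>t. ennreal (lam t) * indicator {a<..b} t) = (\<lambda>t. ennreal (indicator {0..1} t *\<^sub>R lam t) * indicator {a<..b} t)"
  proof
    fix t show "ennreal (lam t) * indicator {a<..b} t = ennreal (indicator {0..1} t *\<^sub>R lam t) * indicator {a<..b} t"
      using assms(2,3) by (cases "a < t \<and> t \<le> b") (auto simp: indicator_def)
  qed
  show ?thesis unfolding e using m by measurable
qed

lemma LamE_mono: "a \<le> b \<Longrightarrow> LamE lam a \<le> LamE lam b"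
  unfolding LamE_def by (intro nn_integral_mono) (auto simp: indicator_def)

lemma LamE_0: "LamE lam 0 = 0"
  unfolding LamE_def by simp

lemma LamE_add:
  fixes lam :: "real \<Rightarrow> real" and a b :: real
  assumes "set_integrable lborel {0..1} lam" "0 \<le> a" "a \<le> b" "b \<le> 1"
  shows "LamE lam b = LamE lam a + (\<integral>\<^sup>+ t. ennreal (lam t) * indicator {a<..b} t \<partial>lborel)"
proof -
  have "LamE lam b = (\<integral>\<^sup>+ t. ennreal (lam t) * indicator {0<..a} t + ennreal (lam t) * indicator {a<..b} t \<partial>lborel)"
    unfolding LamE_def using assms by (intro nn_integral_cong) (auto simp: indicator_def)
  also have "\<dots> = LamE lam a + (\<integral>\<^sup>+ t. ennreal (lam t) * indicator {a<..b} t \<partial>lborel)"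
    unfolding LamE_def using assms
    by (intro nn_integral_add) (auto intro: lam_meas)
  finally show ?thesis .
qed

lemma LamE_fin:
  fixes lam :: "real \<Rightarrow> real"
  assumes "set_integrable lborel {0..1} lam" "x \<le> 1"
  shows "LamE lam x < \<infinity>"
proof -
  have "LamE lam x \<le> (\<integral>\<^sup>+ t. ennreal (norm (indicator {0..1} t *\<^sub>R lam t)) \<partial>lborel)"
    unfolding LamE_def using assms(2)
    by (intro nn_integral_mono) (auto simp: indicator_def)
  also have "\<dots> < \<infinity>" using assms(1) unfolding set_integrable_def
    by (simp add: integrable_iff_bounded)
  finally show ?thesis .
qed

lemma LamE_pos:
  fixes lam :: "real \<Rightarrow> real"
  assumes "set_integrable lborel {0..1} lam" "\<forall>r\<ge>0. 0 < lam r"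
  shows "0 < LamE lam 1"
proof (rule ccontr)
  assume "\<not> 0 < LamE lam 1"
  hence "LamE lam 1 = 0" by (simp add: order.strict_iff_not)
  hence "emeasure lborel {x\<in>space lborel. ennreal (lam x) * indicator {0<..1} x \<noteq> 0} = 0"
    unfolding LamE_def using lam_meas[OF assms(1), of 0 1] by (subst (asm) nn_integral_0_iff) auto
  moreover have "{x\<in>space lborel. ennreal (lam x) * indicator {0<..1} x \<noteq> 0} = {0<..1::real}"
    using assms(2) by (auto simp: indicator_def ennreal_eq_0_iff not_le)
  ultimately show False by simp
qed


definition aa :: "nat \<Rightarrow> nat list \<times> real \<Rightarrow> real" where
  "aa i y = (if fst y = [i] then snd y else if strict_prefix [i] (fst y) then 1 else 0)"

definition uu :: "nat \<Rightarrow> (real \<Rightarrow> real) \<Rightarrow> nat list \<times> real \<Rightarrow> real" where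
  "uu i lam y = enn2real (LamE lam (min (aa i y) 1)) / enn2real (LamE lam 1)"

definition gg :: "nat \<Rightarrow> (real \<Rightarrow> real) \<Rightarrow> nat list \<times> real \<Rightarrow> ennreal" where
  "gg i lam x = (if fst x = [i] then ennreal (1 / enn2real (LamE lam 1)) * indicator {0<..1} (snd x) else 0)"

lemma aa_range: "y \<in> pts K \<Longrightarrow> 0 \<le> aa i y \<and> aa i y \<le> 1"
  unfolding aa_def pts_def by auto

lemma uu_pts: "y \<in> pts K \<Longrightarrow> uu i lam y = enn2real (LamE lam (aa i y)) / enn2real (LamE lam 1)"
  unfolding uu_def using aa_range[of y K i] by simp

lemma slice: "0 < t \<Longrightarrow> t \<le> 1 \<Longrightarrow> (([i], t) \<in> seg0 y) \<longleftrightarrow> t \<le> aa i y"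
  unfolding aa_def seg0_def by auto

lemma in_geo: "min (aa i y) (aa i z) < t \<Longrightarrow> t \<le> max (aa i y) (aa i z) \<Longrightarrow> 0 \<le> aa i y \<Longrightarrow> 0 \<le> aa i z
  \<Longrightarrow> aa i y \<le> 1 \<Longrightarrow> aa i z \<le> 1 \<Longrightarrow> ([i], t) \<in> geo y z"
  unfolding geo_def using slice[of t i y] slice[of t i z] by auto

lemma count_ge: "a \<in> A \<Longrightarrow> F a \<le> (\<integral>\<^sup>+ v. F v \<partial>count_space A)"
proof -
  assume a: "a \<in> A"
  have "(\<integral>\<^sup>+ v. F a * indicator {a} v \<partial>count_space A) = F a * emeasure (count_space A) {a}"
    using a by (intro nn_integral_cmult_indicator) auto
  also have "\<dots> = F a" using a by simp
  finally have "F a = (\<integral>\<^sup>+ v. F a * indicator {a} v \<partial>count_space A)" by simp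
  also have "\<dots> \<le> (\<integral>\<^sup>+ v. F v \<partial>count_space A)"
    by (intro nn_integral_mono) (auto simp: indicator_def)
  finally show ?thesis .
qed

lemma UG:
  fixes lam :: "real \<Rightarrow> real"
  assumes li: "set_integrable lborel {0..1} lam" and lp: "\<forall>r\<ge>0. 0 < lam r" and iK: "i < K"
  shows "upper_gradient K lam (uu i lam) (gg i lam)"
  unfolding upper_gradient_def
proof (intro conjI ballI)
  show "borel_on_tree (gg i lam)"
    unfolding borel_on_tree_def
  proof
    fix v :: "nat list"
    show "(\<lambda>t. gg i lam (v, t)) \<in> borel_measurable borel"
      unfolding gg_def by (cases "v = [i]") (simp_all, measurable)
  qed
next
  fix y z assume y: "y \<in> pts K" and z: "z \<in> pts K"
  define lo where "lo = min (aa i y) (aa i z)"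
  define hi where "hi = max (aa i y) (aa i z)"
  define L1 where "L1 = enn2real (LamE lam 1)"
  define c where "c = 1 / L1"
  have r: "0 \<le> lo" "lo \<le> hi" "hi \<le> 1" using aa_range[OF y, of i] aa_range[OF z, of i]
    unfolding lo_def hi_def by auto
  have fin: "\<And>x. x \<le> 1 \<Longrightarrow> LamE lam x < \<infinity>" using LamE_fin[OF li] by auto
  have L1pos: "0 < L1" unfolding L1_def using LamE_pos[OF li lp] fin[of 1]
    by (simp add: enn2real_positive_iff)
  have c0: "0 \<le> c" unfolding c_def using L1pos by simp
  have mono: "enn2real (LamE lam lo) \<le> enn2real (LamE lam hi)"
    using LamE_mono[OF r(2)] fin[of hi] r by (intro enn2real_mono) auto
  have Lm: "\<And>s t. s \<le> t \<Longrightarrow> t \<le> 1 \<Longrightarrow> enn2real (LamE lam s) \<le> enn2real (LamE lam t)"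
    using LamE_mono fin by (intro enn2real_mono) auto
  have "\<bar>uu i lam y - uu i lam z\<bar> = c * (enn2real (LamE lam hi) - enn2real (LamE lam lo))"
  proof (cases "aa i y \<le> aa i z")
    case True
    hence "enn2real (LamE lam (aa i y)) \<le> enn2real (LamE lam (aa i z))"
      using Lm aa_range[OF z, of i] by auto
    thus ?thesis using True L1pos unfolding uu_pts[OF y] uu_pts[OF z] c_def lo_def hi_def L1_def[symmetric]
      by (simp add: abs_if field_simps)
  next
    case False
    hence "enn2real (LamE lam (aa i z)) \<le> enn2real (LamE lam (aa i y))"
      using Lm aa_range[OF y, of i] by auto
    thus ?thesis using False L1pos unfolding uu_pts[OF y] uu_pts[OF z] c_def lo_def hi_def L1_def[symmetric]
      by (simp add: abs_if field_simps)
  qed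
  hence "ennreal \<bar>uu i lam y - uu i lam z\<bar> = ennreal c * ennreal (enn2real (LamE lam hi) - enn2real (LamE lam lo))"
    using mono c0 by (simp add: ennreal_mult)
  also have "ennreal (enn2real (LamE lam hi) - enn2real (LamE lam lo)) = LamE lam hi - LamE lam lo"
    using fin[of hi] fin[of lo] r by (subst ennreal_minus[symmetric]) auto
  also have "\<dots> = (\<integral>\<^sup>+ t. ennreal (lam t) * indicator {lo<..hi} t \<partial>lborel)"
    using LamE_add[OF li r] fin[of lo] r by simp
  also have "ennreal c * \<dots> = (\<integral>\<^sup>+ t. ennreal c * (ennreal (lam t) * indicator {lo<..hi} t) \<partial>lborel)"
    using lam_meas[OF li r(1) r(3)] by (subst nn_integral_cmult) auto
  also have "\<dots> \<le> (\<integral>\<^sup>+ t. gg i lam ([i], t) * indicator (geo y z) ([i], t) * ennreal (lam (dist0 ([i], t))) * indicator {0<..1} t \<partial>lborel)"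
  proof (intro nn_integral_mono)
    fix t :: real
    show "ennreal c * (ennreal (lam t) * indicator {lo<..hi} t) \<le> gg i lam ([i], t) * indicator (geo y z) ([i], t) * ennreal (lam (dist0 ([i], t))) * indicator {0<..1} t"
    proof (cases "lo < t \<and> t \<le> hi")
      case True
      hence "([i], t) \<in> geo y z" using in_geo[of i y z t] aa_range[OF y, of i] aa_range[OF z, of i]
        unfolding lo_def hi_def by auto
      moreover have "0 < t" "t \<le> 1" using True r by auto
      ultimately show ?thesis using True unfolding gg_def c_def L1_def by (simp add: dist0_def mult.assoc)
    qed (auto simp: indicator_def)
  qed
  also have "\<dots> \<le> eint lam K (\<lambda>x. gg i lam x * indicator (geo y z) x)"
    unfolding eint_def using iK
    by (intro count_ge[where F = "\<lambda>v. \<integral>\<^sup>+ t. gg i lam (v, t) * indicator (geo y z) (v, t) * ennreal (lam (dist0 (v, t))) * indicator {0<..1} t \<partial>lborel"])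
       (auto simp: verts_def)
  finally show "ennreal \<bar>uu i lam y - uu i lam z\<bar> \<le> eint lam K (\<lambda>x. gg i lam x * indicator (geo y z) x)" .
qed


lemma epow_le: "0 < p \<Longrightarrow> 0 \<le> B \<Longrightarrow> x \<le> ennreal B \<Longrightarrow> epow x p \<le> ennreal (B powr p)"
proof -
  assume p: "0 < p" and B: "0 \<le> B" and x: "x \<le> ennreal B"
  hence xt: "x \<noteq> \<infinity>" by (auto simp: top_unique)
  have "enn2real x \<le> B" using x B
    by (metis enn2real_ennreal enn2real_mono ennreal_less_top)
  hence "enn2real x powr p \<le> B powr p" by (intro powr_mono2) (use p in auto)
  thus ?thesis using xt unfolding epow_def by (simp add: ennreal_leI)
qed

lemma Lploc_bdd:
  fixes mu :: "real \<Rightarrow> real" and p B :: real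
  assumes mi: "\<forall>n::nat. set_integrable lborel {0..real n} mu" and p: "0 < p" and B: "0 \<le> B"
    and f: "\<And>x. f x \<le> ennreal B"
  shows "Lploc K mu p f"
  unfolding Lploc_def
proof
  fix n :: nat
  define h where "h = (\<lambda>s. ennreal (indicator {0..real n} s *\<^sub>R mu s))"
  have hm0: "(\<lambda>s. indicator {0..real n} s *\<^sub>R mu s) \<in> borel_measurable lborel"
    using mi unfolding set_integrable_def by blast
  have hm[measurable]: "h \<in> borel_measurable borel"
    unfolding h_def using hm0 by measurable
  define B0 where "B0 = (\<integral>\<^sup>+ s. h s \<partial>lborel)"
  have B0f: "B0 < \<infinity>"
  proof -
    have "B0 \<le> (\<integral>\<^sup>+ s. ennreal (norm (indicator {0..real n} s *\<^sub>R mu s)) \<partial>lborel)"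
      unfolding B0_def h_def by (intro nn_integral_mono) auto
    also have "\<dots> < \<infinity>" using mi unfolding set_integrable_def
      by (simp add: integrable_iff_bounded)
    finally show ?thesis .
  qed
  define Bp where "Bp = ennreal (B powr p)"
  define S where "S = {v \<in> verts K - {[]}. length v \<le> n}"
  have Sfin: "finite S"
    by (rule finite_subset[OF _ finite_lists_length_le[of "{..<K}" n]]) (auto simp: S_def verts_def)
  have per: "(\<integral>\<^sup>+ t. epow (f (v, t)) p * indicator (Xn K n) (v, t) * ennreal (mu (dist0 (v, t))) * indicator {0<..1} t \<partial>lborel)
      \<le> Bp * B0 * indicator S v" if v: "v \<in> verts K - {[]}" for v
  proof -
    define m where "m = real (length v) - 1"
    have m0: "0 \<le> m" using v unfolding m_def by (cases v) auto
    have "(\<integral>\<^sup>+ t. epow (f (v, t)) p * indicator (Xn K n) (v, t) * ennreal (mu (dist0 (v, t))) * indicator {0<..1} t \<partial>lborel)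
      \<le> (\<integral>\<^sup>+ t. (Bp * indicator S v) * h (m + 1 * t) \<partial>lborel)"
    proof (intro nn_integral_mono)
      fix t :: real
      show "epow (f (v, t)) p * indicator (Xn K n) (v, t) * ennreal (mu (dist0 (v, t))) * indicator {0<..1} t
        \<le> (Bp * indicator S v) * h (m + 1 * t)"
      proof (cases "(v, t) \<in> Xn K n \<and> 0 < t \<and> t \<le> 1")
        case True
        have d: "dist0 (v, t) = m + t" using v unfolding dist0_def m_def by auto
        have le: "m + t \<le> real n" using True d unfolding Xn_def by auto
        hence "v \<in> S" using v True unfolding S_def m_def by auto
        moreover have "h (m + 1 * t) = ennreal (mu (m + t))" unfolding h_def using le m0 True by auto
        moreover have "epow (f (v, t)) p \<le> Bp" unfolding Bp_def using epow_le[OF p B f] .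
        ultimately show ?thesis using True d by (auto intro!: mult_right_mono)
      qed (auto simp: indicator_def)
    qed
    also have "\<dots> = (Bp * indicator S v) * (\<integral>\<^sup>+ t. h (m + 1 * t) \<partial>lborel)"
      by (intro nn_integral_cmult) measurable
    also have "(\<integral>\<^sup>+ t. h (m + 1 * t) \<partial>lborel) = B0"
      unfolding B0_def using nn_integral_real_affine[OF hm, of 1 m] by simp
    finally show ?thesis by (simp add: mult_ac)
  qed
  have "eint mu K (\<lambda>x. epow (f x) p * indicator (Xn K n) x) \<le> (\<integral>\<^sup>+ v. (Bp * B0) * indicator S v \<partial>count_space (verts K - {[]}))"
    unfolding eint_def by (intro nn_integral_mono) (use per in auto)
  also have "\<dots> = (Bp * B0) * emeasure (count_space (verts K - {[]})) S"
    by (intro nn_integral_cmult_indicator) (auto simp: S_def)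
  also have "\<dots> = (Bp * B0) * of_nat (card S)"
    using Sfin by (subst emeasure_count_space_finite) (auto simp: S_def)
  also have "\<dots> < \<infinity>" using B0f unfolding Bp_def
    by (simp add: ennreal_mult_less_top of_nat_less_top)
  finally show "eint mu K (\<lambda>x. epow (f x) p * indicator (Xn K n) x) < \<infinity>" .
qed


lemma Cap_mono: "E' \<subseteq> E \<Longrightarrow> F' \<subseteq> F \<Longrightarrow> Cap K lam mu p E' F' \<le> Cap K lam mu p E F"
  unfolding Cap_def by (rule INF_superset_mono) auto

lemma Xn_mono: "m \<le> n \<Longrightarrow> Xn K m \<subseteq> Xn K n"
  unfolding Xn_def by auto

lemma En_mono: "m \<le> n \<Longrightarrow> En K i n \<subseteq> En K i m"
  unfolding En_def using Xn_mono[of m n K] by auto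

lemma Fn_mono: "m \<le> n \<Longrightarrow> Fn K i n \<subseteq> Fn K i m"
  unfolding Fn_def using Xn_mono[of m n K] by auto

lemma uu_bdd:
  fixes lam :: "real \<Rightarrow> real"
  assumes li: "set_integrable lborel {0..1} lam" and lp: "\<forall>r\<ge>0. 0 < lam r"
  shows "0 \<le> uu i lam x \<and> uu i lam x \<le> 1"
proof -
  have fin: "\<And>x. x \<le> 1 \<Longrightarrow> LamE lam x < \<infinity>" using LamE_fin[OF li] by auto
  have L1pos: "0 < enn2real (LamE lam 1)" using LamE_pos[OF li lp] fin[of 1]
    by (simp add: enn2real_positive_iff)
  have "enn2real (LamE lam (min (aa i x) 1)) \<le> enn2real (LamE lam 1)"
    using LamE_mono fin by (intro enn2real_mono) auto
  thus ?thesis unfolding uu_def using L1pos by (simp add: divide_le_eq_1)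
qed

lemma uu_meas:
  fixes lam :: "real \<Rightarrow> real"
  assumes li: "set_integrable lborel {0..1} lam"
  shows "borel_on_tree (uu i lam)"
  unfolding borel_on_tree_def
proof
  fix v :: "nat list"
  have fin: "\<And>x. x \<le> 1 \<Longrightarrow> LamE lam x < \<infinity>" using LamE_fin[OF li] by auto
  have mono: "mono (\<lambda>t. enn2real (LamE lam (min t 1)))"
    unfolding mono_def using LamE_mono fin by (auto intro!: enn2real_mono)
  have m: "(\<lambda>t. enn2real (LamE lam (min t 1))) \<in> borel_measurable borel"
    using borel_measurable_mono[OF mono] .
  show "(\<lambda>t. uu i lam (v, t)) \<in> borel_measurable borel"
  proof (cases "v = [i]")
    case True
    then show ?thesis unfolding uu_def aa_def using m by simp
  next
    case False
    then show ?thesis unfolding uu_def aa_def by simp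
  qed
qed


theorem lemma3p5:
  fixes p :: real and K i :: nat and lam mu :: "real \<Rightarrow> real"
  assumes "1 < p" and "2 \<le> K" and "i < K"
    and "\<forall>r\<ge>0. 0 < lam r" and "\<forall>r\<ge>0. 0 < mu r"
    and "\<forall>n::nat. set_integrable lborel {0..real n} lam"
    and "\<forall>n::nat. set_integrable lborel {0..real n} mu"
    and "\<forall>n::nat. set_integrable lborel {0..real n} (\<lambda>r. (lam r powr p / mu r) powr (1 / (p - 1)))"
  shows "(\<forall>n::nat. 1 \<le> n \<longrightarrow>
            Cap K lam mu p (En K i (Suc n)) (Fn K i (Suc n)) \<le> Cap K lam mu p (En K i n) (Fn K i n))
       \<and> (\<exists>M1::real. 0 < M1 \<and> (\<forall>n::nat. 1 \<le> n \<longrightarrow> Cap K lam mu p (En K i n) (Fn K i n) \<le> ennreal M1))"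
proof (intro conjI allI impI)
  fix n :: nat
  show "Cap K lam mu p (En K i (Suc n)) (Fn K i (Suc n)) \<le> Cap K lam mu p (En K i n) (Fn K i n)"
    by (rule Cap_mono[OF En_mono Fn_mono]) auto
next
  have li: "set_integrable lborel {0..1} lam" using assms(6)[rule_format, of 1] by simp
  have lp: "\<forall>r\<ge>0. 0 < lam r" using assms(4) .
  have p0: "0 < p" using assms(1) by simp
  define c where "c = 1 / enn2real (LamE lam 1)"
  have fin: "\<And>x. x \<le> 1 \<Longrightarrow> LamE lam x < \<infinity>" using LamE_fin[OF li] by auto
  have L1pos: "0 < enn2real (LamE lam 1)" using LamE_pos[OF li lp] fin[of 1]
    by (simp add: enn2real_positive_iff)
  have c0: "0 \<le> c" unfolding c_def using L1pos by simp
  have ug: "upper_gradient K lam (uu i lam) (gg i lam)" using UG[OF li lp assms(3)] .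
  have Lg: "Lploc K mu p (gg i lam)"
    by (rule Lploc_bdd[OF assms(7) p0 c0]) (auto simp: gg_def c_def indicator_def)
  have Lu: "Lploc K mu p (\<lambda>x. ennreal \<bar>uu i lam x\<bar>)"
    by (rule Lploc_bdd[OF assms(7) p0, of 1]) (use uu_bdd[OF li lp] in auto)
  have N1: "N1ploc K lam mu p (uu i lam)"
    unfolding N1ploc_def using uu_meas[OF li] Lu ug Lg by blast
  have onE: "\<forall>x\<in>En K i 1. uu i lam x = 1"
  proof
    fix x assume x: "x \<in> En K i 1"
    hence xp: "x \<in> pts K" and d: "dist0 x > 1" and t: "fst x = [] \<or> hd (fst x) = i"
      unfolding En_def Xn_def T1_def by auto
    have ne: "fst x \<noteq> []" using xp d unfolding pts_def dist0_def by auto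
    have "fst x \<noteq> [i]" using xp d unfolding pts_def dist0_def by auto
    then obtain w where "fst x = i # w" "w \<noteq> []" using ne t by (cases "fst x") auto
    hence "strict_prefix [i] (fst x)" by (auto simp: strict_prefix_def)
    hence "aa i x = 1" unfolding aa_def using \<open>fst x \<noteq> [i]\<close> by simp
    thus "uu i lam x = 1" unfolding uu_pts[OF xp] using L1pos by simp
  qed
  have onF: "\<forall>x\<in>Fn K i 1. uu i lam x = 0"
  proof
    fix x assume x: "x \<in> Fn K i 1"
    hence xp: "x \<in> pts K" and t: "fst x \<noteq> [] \<and> hd (fst x) \<noteq> i"
      unfolding Fn_def Xn_def T1_def by auto
    have "\<not> strict_prefix [i] (fst x)" using t by (cases "fst x") auto
    moreover have "fst x \<noteq> [i]" using t by auto
    ultimately have "aa i x = 0" unfolding aa_def by simp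
    thus "uu i lam x = 0" unfolding uu_pts[OF xp] by (simp add: LamE_0)
  qed
  define En1 where "En1 = eint mu K (\<lambda>x. epow (gg i lam x) p)"
  have "(\<lambda>x. epow (gg i lam x) p) = (\<lambda>x. epow (gg i lam x) p * indicator (Xn K 1) x)"
  proof
    fix x :: "nat list \<times> real"
    show "epow (gg i lam x) p = epow (gg i lam x) p * indicator (Xn K 1) x"
    proof (cases "fst x = [i] \<and> 0 < snd x \<and> snd x \<le> 1")
      case True
      hence "x \<in> Xn K 1" using assms(3) unfolding Xn_def pts_def dist0_def verts_def
        by (cases x) auto
      thus ?thesis by simp
    next
      case False
      hence "gg i lam x = 0" unfolding gg_def by (auto simp: indicator_def)
      thus ?thesis using p0 by (simp add: epow_def)
    qed
  qed
  hence En1f: "En1 < \<infinity>" using Lg unfolding Lploc_def En1_def by metis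
  have capE: "Cap K lam mu p (En K i 1) (Fn K i 1) \<le> En1"
    unfolding Cap_def En1_def
    by (rule INF_lower2[of "(uu i lam, gg i lam)"]) (use N1 ug onE onF uu_bdd[OF li lp] in auto)
  show "\<exists>M1::real. 0 < M1 \<and> (\<forall>n::nat. 1 \<le> n \<longrightarrow> Cap K lam mu p (En K i n) (Fn K i n) \<le> ennreal M1)"
  proof (intro exI conjI allI impI)
    show "0 < enn2real En1 + 1" using enn2real_nonneg[of En1] by linarith
    fix n :: nat assume n: "1 \<le> n"
    have "Cap K lam mu p (En K i n) (Fn K i n) \<le> Cap K lam mu p (En K i 1) (Fn K i 1)"
      by (rule Cap_mono[OF En_mono Fn_mono]) (use n in auto)
    also have "\<dots> \<le> En1" by (rule capE)
    also have "\<dots> = ennreal (enn2real En1)" using En1f by simp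
    also have "\<dots> \<le> ennreal (enn2real En1 + 1)" by (intro ennreal_leI) simp
    finally show "Cap K lam mu p (En K i n) (Fn K i n) \<le> ennreal (enn2real En1 + 1)" .
  qed
qed

end
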